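(* Let $\Omega\subseteq\mathbb{R}^n$ be open, $\nu,C_1,\dots,C_{n-1}\in\mathcal{C}^\infty(\Omega,\mathbb{R})$, $H:=C_{n-1}$, and $X$ the vector field on $\Omega$ with components $X_i=\nu\cdot\frac{\partial(C_1,\dots,C_{n-2},x_i,H)}{\partial(x_1,\dots,x_n)}$. Let $\overline{x}_e\in\mathcal{E}^{C_{n-1}}_{C_1,\dots,C_{n-2}}$ be a non-degenerate regular equilibrium point of $X$, let $\Omega'\subseteq\Omega$ be any open neighborhood of $\overline{x}_e$ and $\Phi:\Omega'\to W':=\Phi(\Omega')$ a smooth diffeomorphism. Then $$\mathcal{I}_{\Phi_\star X}(\Phi(\overline{x}_e))=\mathcal{I}_X(\overline{x}_e),$$ where $\mathcal{I}_{\Phi_\star X}(\Phi(\overline{x}_e))$ is computed from the Hamiltonian form of $\Phi_\star X$ with data $(\nu_\Phi;\Phi_\star C_1,\dots,\Phi_\star C_{n-2};\Phi_\star H)$ (in which $\Phi(\overline{x}_e)$ is again a non-degenerate regular equilibrium).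
   Context: $\langle\cdot,\cdot\rangle$ is the standard inner product, $\nabla$ the gradient, $\operatorname{Hess}F=\mathrm{D}(\nabla F)$, $\frac{\partial(\cdots)}{\partial(x_1,\dots,x_n)}$ a Jacobian determinant. For decomposable $k$-vectors, $\langle u_1\wedge\dots\wedge u_k,v_1\wedge\dots\wedge v_k\rangle_k:=\det[\langle u_i,v_j\rangle]$. $\mathcal{E}^{C_{n-1}}_{C_1,\dots,C_{n-2}}:=\{\overline{x}\in\Omega:\nu(\overline{x})\neq0,\ \nabla C_1\wedge\dots\wedge\nabla C_{n-2}(\overline{x})\neq0,\ \nabla C_1\wedge\dots\wedge\nabla C_{n-1}(\overline{x})=0\}$. For $\overline{x}_e$ in it, $\overrightarrow{\lambda_e}\in\mathbb{R}^{n-2}$ is the unique vector with $\nabla H(\overline{x}_e)+\sum_i\lambda^e_i\nabla C_i(\overline{x}_e)=0$, $F_{\overrightarrow{\lambda_e}}:=H+\sum_i\lambda^e_iC_i$; non-degeneracy means $A:=\operatorname{Hess}F_{\overrightarrow{\lambda_e}}(\overline{x}_e)$ invertible, and $\mathcal{I}_X(\overline{x}_e):=\nu^2(\overline{x}_e)\det(A)\langle A^{-1}\nabla C_1(\overline{x}_e)\wedge\dots\wedge A^{-1}\nabla C_{n-2}(\overline{x}_e),\nabla C_1(\overline{x}_e)\wedge\dots\wedge\nabla C_{n-2}(\overline{x}_e)\rangle_{n-2}$. For functions, $\Phi_\star f:=f\circ\Phi^{-1}$; $\Phi_\star X$ is the push-forward; $\nu_\Phi:=\Phi_\star\nu\cdot\Phi_\star\det(\mathrm{D}\Phi)$;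 $\Phi_\star X$ has components $\nu_\Phi\cdot\frac{\partial(\Phi_\star C_1,\dots,\Phi_\star C_{n-2},y_i,\Phi_\star H)}{\partial(y_1,\dots,y_n)}$, and $\mathcal{I}_{\Phi_\star X}(\Phi(\overline{x}_e))$ is defined by the same formula as $\mathcal{I}_X$ with $\nu,C_i,H,\overline{x}_e,\overrightarrow{\lambda_e}$ replaced by $\nu_\Phi,\Phi_\star C_i,\Phi_\star H,\Phi(\overline{x}_e),\overrightarrow{\lambda_e}$. *)

theory Defs
  imports "HOL-Analysis.Analysis"
begin

text \<open>Smoothness (C-infinity) on a set: all iterated directional (Frechet) derivatives exist.
  D vs x is the iterated derivative of f at x in the directions listed in vs.\<close>
definition smooth_on :: "'a::real_normed_vector set \<Rightarrow> ('a \<Rightarrow> 'b::real_normed_vector) \<Rightarrow> bool" where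
  "smooth_on S f \<longleftrightarrow>
     (\<exists>D :: 'a list \<Rightarrow> 'a \<Rightarrow> 'b.
        (\<forall>x\<in>S. D [] x = f x) \<and>
        (\<forall>vs. \<forall>x\<in>S. (D vs has_derivative (\<lambda>v. D (v # vs) x)) (at x)))"

definition diffeo_on :: "'a::real_normed_vector set \<Rightarrow> ('a \<Rightarrow> 'a) \<Rightarrow> bool" where
  "diffeo_on U \<Phi> \<longleftrightarrow> open U \<and> open (\<Phi> ` U) \<and> inj_on \<Phi> U \<and> smooth_on U \<Phi>
      \<and> smooth_on (\<Phi> ` U) (inv_into U \<Phi>)"

definition grad :: "(real^'n \<Rightarrow> real) \<Rightarrow> real^'n \<Rightarrow> real^'n" where
  "grad f x = (\<chi> i. frechet_derivative f (at x) (axis i 1))"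

definition Hess :: "(real^'n \<Rightarrow> real) \<Rightarrow> real^'n \<Rightarrow> real^'n^'n" where
  "Hess f x = matrix (frechet_derivative (grad f) (at x))"

definition detn :: "nat \<Rightarrow> (nat \<Rightarrow> nat \<Rightarrow> real) \<Rightarrow> real" where
  "detn k M = (\<Sum>p | p permutes {..<k}. of_int (sign p) * (\<Prod>i<k. M i (p i)))"

text \<open>wedge_ip k u v = < u_1 ^ ... ^ u_k , v_1 ^ ... ^ v_k >_k = det [<u_i, v_j>] (1-based indices).\<close>
definition wedge_ip :: "nat \<Rightarrow> (nat \<Rightarrow> real^'n) \<Rightarrow> (nat \<Rightarrow> real^'n) \<Rightarrow> real" where
  "wedge_ip k u v = detn k (\<lambda>i j. u (Suc i) \<bullet> v (Suc j))"

text \<open>A decomposable k-vector u_1 ^ ... ^ u_k is zero iff its squared norm <w,w>_k vanishes.\<close>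
definition wedge_zero :: "nat \<Rightarrow> (nat \<Rightarrow> real^'n) \<Rightarrow> bool" where
  "wedge_zero k u \<longleftrightarrow> wedge_ip k u u = 0"

text \<open>The set E^{C_{n-1}}_{C_1,...,C_{n-2}} in Omega, with n = CARD('n) and C_1..C_{n-1} given by C.\<close>
definition E_set :: "(real^'n) set \<Rightarrow> (real^'n \<Rightarrow> real) \<Rightarrow> (nat \<Rightarrow> real^'n \<Rightarrow> real) \<Rightarrow> (real^'n) set" where
  "E_set \<Omega> \<nu> C = {x \<in> \<Omega>. \<nu> x \<noteq> 0
       \<and> \<not> wedge_zero (CARD('n) - 2) (\<lambda>i. grad (C i) x)
       \<and> wedge_zero (CARD('n) - 1) (\<lambda>i. grad (C i) x)}"

definition F_lam :: "(nat \<Rightarrow> real^'n \<Rightarrow> real) \<Rightarrow> (nat \<Rightarrow> real) \<Rightarrow> real^'n \<Rightarrow> real" where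
  "F_lam C lam = (\<lambda>y. C (CARD('n) - 1) y + (\<Sum>i=1..CARD('n) - 2. lam i * C i y))"

definition lagrange_cond :: "(nat \<Rightarrow> real^'n \<Rightarrow> real) \<Rightarrow> (nat \<Rightarrow> real) \<Rightarrow> real^'n \<Rightarrow> bool" where
  "lagrange_cond C lam x \<longleftrightarrow>
     grad (C (CARD('n) - 1)) x + (\<Sum>i=1..CARD('n) - 2. lam i *\<^sub>R grad (C i) x) = 0"

definition nondegenerate :: "(nat \<Rightarrow> real^'n \<Rightarrow> real) \<Rightarrow> (nat \<Rightarrow> real) \<Rightarrow> real^'n \<Rightarrow> bool" where
  "nondegenerate C lam x \<longleftrightarrow> invertible (Hess (F_lam C lam) x)"

definition index_I :: "(real^'n \<Rightarrow> real) \<Rightarrow> (nat \<Rightarrow> real^'n \<Rightarrow> real) \<Rightarrow> (nat \<Rightarrow> real) \<Rightarrow> real^'n \<Rightarrow> real" where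
  "index_I \<nu> C lam x =
     (let A = Hess (F_lam C lam) x in
       (\<nu> x)^2 * det A *
       wedge_ip (CARD('n) - 2) (\<lambda>i. matrix_inv A *v grad (C i) x) (\<lambda>i. grad (C i) x))"

definition push_fun :: "(real^'n) set \<Rightarrow> (real^'n \<Rightarrow> real^'n) \<Rightarrow> (real^'n \<Rightarrow> real) \<Rightarrow> real^'n \<Rightarrow> real" where
  "push_fun U \<Phi> f = f \<circ> inv_into U \<Phi>"

definition push_nu :: "(real^'n) set \<Rightarrow> (real^'n \<Rightarrow> real^'n) \<Rightarrow> (real^'n \<Rightarrow> real) \<Rightarrow> real^'n \<Rightarrow> real" where
  "push_nu U \<Phi> \<nu> = (\<lambda>y. \<nu> (inv_into U \<Phi> y) *
       det (matrix (frechet_derivative \<Phi> (at (inv_into U \<Phi> y)))))"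

end

theory Submission imports Defs "Jordan_Normal_Form.Determinant" begin

lemma detn_zero_iff:
  "detn m M = 0 \<longleftrightarrow> (\<exists>c. (\<exists>j<m. c j \<noteq> 0) \<and> (\<forall>i<m. (\<Sum>j<m. M i j * c j) = 0))"
proof -
  define A :: "real Matrix.mat" where "A = Matrix.mat m m (\<lambda>(i,j). M i j)"
  have dA: "detn m M = Determinant.det A"
    unfolding detn_def Determinant.det_def A_def by (simp add: atLeast0LessThan)
  have cA: "A \<in> carrier_mat m m" by (simp add: A_def)
  have mv: "\<And>v. v \<in> carrier_vec m \<Longrightarrow> (A *\<^sub>v v = 0\<^sub>v m) \<longleftrightarrow> (\<forall>i<m. (\<Sum>j<m. M i j * v $ j) = 0)"
    by (auto simp: A_def mult_mat_vec_def scalar_prod_def atLeast0LessThan vec_eq_iff)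
  show ?thesis
  proof
    assume "detn m M = 0"
    then obtain v where v: "v \<in> carrier_vec m" "v \<noteq> 0\<^sub>v m" "A *\<^sub>v v = 0\<^sub>v m"
      using det_0_iff_vec_prod_zero[OF cA] dA by auto
    have "\<exists>j<m. v $ j \<noteq> 0" using v(1,2) by (auto simp: vec_eq_iff)
    then show "\<exists>c. (\<exists>j<m. c j \<noteq> 0) \<and> (\<forall>i<m. (\<Sum>j<m. M i j * c j) = 0)"
      using mv[OF v(1)] v(3) by blast
  next
    assume "\<exists>c. (\<exists>j<m. c j \<noteq> 0) \<and> (\<forall>i<m. (\<Sum>j<m. M i j * c j) = 0)"
    then obtain c where c: "\<exists>j<m. c j \<noteq> 0" "\<forall>i<m. (\<Sum>j<m. M i j * c j) = 0" by blast
    define v where "v = Matrix.vec m c"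
    have v: "v \<in> carrier_vec m" "v \<noteq> 0\<^sub>v m" using c(1) by (auto simp: v_def vec_eq_iff)
    have "A *\<^sub>v v = 0\<^sub>v m" using mv[OF v(1)] c(2) by (simp add: v_def)
    then show "detn m M = 0" using det_0_iff_vec_prod_zero[OF cA] dA v by auto
  qed
qed

no_notation Matrix.vec_index (infixl "$" 100)
hide_const (open) Determinant.det Matrix.mat Matrix.vec Matrix.row Matrix.col
hide_type (open) Matrix.vec

lemma gram_zero_iff:
  "wedge_zero m (u :: nat \<Rightarrow> real^'n) \<longleftrightarrow> (\<exists>c. (\<exists>j<m. c j \<noteq> 0) \<and> (\<Sum>j<m. c j *\<^sub>R u (Suc j)) = 0)"
proof -
  have e: "\<And>c i. (\<Sum>j<m. (u (Suc i) \<bullet> u (Suc j)) * c j) = u (Suc i) \<bullet> (\<Sum>j<m. c j *\<^sub>R u (Suc j))"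
    by (simp add: inner_sum_right mult.commute)
  show ?thesis
  proof
    assume "wedge_zero m u"
    then obtain c where c: "\<exists>j<m. c j \<noteq> 0" "\<forall>i<m. u (Suc i) \<bullet> (\<Sum>j<m. c j *\<^sub>R u (Suc j)) = 0"
      unfolding wedge_zero_def wedge_ip_def detn_zero_iff e by blast
    define w where "w = (\<Sum>j<m. c j *\<^sub>R u (Suc j))"
    have "w \<bullet> w = (\<Sum>i<m. c i * (u (Suc i) \<bullet> w))"
      by (simp add: w_def inner_sum_left)
    also have "\<dots> = 0"
    proof (rule sum.neutral, rule ballI)
      fix i assume "i \<in> {..<m}"
      then have "u (Suc i) \<bullet> w = 0" using c(2) unfolding w_def by blast
      then show "c i * (u (Suc i) \<bullet> w) = 0" by simp
    qed
    finally have "w = 0" by (simp only: inner_eq_zero_iff)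
    then have "(\<Sum>j<m. c j *\<^sub>R u (Suc j)) = 0" by (simp only: w_def)
    then show "\<exists>c. (\<exists>j<m. c j \<noteq> 0) \<and> (\<Sum>j<m. c j *\<^sub>R u (Suc j)) = 0" using c(1) by blast
  next
    assume "\<exists>c. (\<exists>j<m. c j \<noteq> 0) \<and> (\<Sum>j<m. c j *\<^sub>R u (Suc j)) = 0"
    then obtain c where c: "\<exists>j<m. c j \<noteq> 0" "(\<Sum>j<m. c j *\<^sub>R u (Suc j)) = 0" by blast
    show "wedge_zero m u"
      unfolding wedge_zero_def wedge_ip_def detn_zero_iff e using c by auto
  qed
qed

lemma wedge_zero_transform:
  fixes Q :: "real^'n^'n"
  assumes Q: "invertible Q" and vu: "\<forall>j<m. v (Suc j) = Q *v u (Suc j)"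
  shows "wedge_zero m v = wedge_zero m u"
proof -
  have s: "(\<Sum>j<m. c j *\<^sub>R v (Suc j)) = Q *v (\<Sum>j<m. c j *\<^sub>R u (Suc j))" for c
    using vu by (simp add: linear_sum[OF matrix_vector_mul_linear] linear_scale[OF matrix_vector_mul_linear])
  have z: "Q *v x = 0 \<longleftrightarrow> x = 0" for x
    using inj_matrix_vector_mult[OF Q] by (metis injD matrix_vector_mult_0_right)
  show ?thesis unfolding gram_zero_iff s z ..
qed

lemma detn_cong: "(\<And>i j. i < m \<Longrightarrow> j < m \<Longrightarrow> M i j = M' i j) \<Longrightarrow> detn m M = detn m M'"
proof -
  assume a: "\<And>i j. i < m \<Longrightarrow> j < m \<Longrightarrow> M i j = M' i j"
  have "(\<Prod>i<m. M i (p i)) = (\<Prod>i<m. M' i (p i))" if "p permutes {..<m}" for p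
    by (rule prod.cong[OF refl]) (use a permutes_in_image[OF that] in auto)
  then show ?thesis unfolding detn_def by (intro sum.cong[OF refl]) simp
qed

lemma matrix_inv_eq:
  fixes A B :: "real^'n^'n"
  assumes "A ** B = mat 1"
  shows "matrix_inv A = B" "B ** A = mat 1"
proof -
  have BA: "B ** A = mat 1" using assms matrix_left_right_inverse by blast
  then have "\<exists>B. A ** B = mat 1 \<and> B ** A = mat 1" using assms by blast
  then have m: "A ** matrix_inv A = mat 1 \<and> matrix_inv A ** A = mat 1"
    unfolding matrix_inv_def by (rule someI_ex)
  have "matrix_inv A = matrix_inv A ** (A ** B)" by (simp add: assms)
  also have "\<dots> = B" using m by (simp add: matrix_mul_assoc)
  finally show "matrix_inv A = B" .
  show "B ** A = mat 1" by (fact BA)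
qed

lemma smooth_diff:
  assumes "smooth_on S f" "open S" "x \<in> S"
  shows "f differentiable (at x)" "(\<lambda>y. frechet_derivative f (at y) v) differentiable (at x)"
proof -
  obtain D where D0: "\<forall>x\<in>S. D [] x = f x" and DD: "\<forall>vs. \<forall>x\<in>S. (D vs has_derivative (\<lambda>v. D (v # vs) x)) (at x)"
    using assms(1) unfolding smooth_on_def by blast
  have fd: "(f has_derivative (\<lambda>v. D [v] y)) (at y)" if "y \<in> S" for y
    using has_derivative_transform_within_open[OF DD[rule_format, of y "[]"] assms(2) that] D0 that by auto
  have fe: "frechet_derivative f (at y) v = D [v] y" if "y \<in> S" for y
    using frechet_derivative_at[OF fd[OF that]] by metis
  show "f differentiable (at x)" using fd[OF assms(3)] unfolding differentiable_def by blast
  have "((\<lambda>y. frechet_derivative f (at y) v) has_derivative (\<lambda>w. D (w # [v]) x)) (at x)"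
    using has_derivative_transform_within_open[OF DD[rule_format, of x "[v]"] assms(2) assms(3)] fe assms(3) by auto
  then show "(\<lambda>y. frechet_derivative f (at y) v) differentiable (at x)" unfolding differentiable_def by blast
qed

lemma has_derivative_vec_comp:
  fixes f :: "'a::real_normed_vector \<Rightarrow> real^'n"
  assumes "\<And>i. ((\<lambda>x. f x $ i) has_derivative (\<lambda>h. f' h $ i)) (at a)"
  shows "(f has_derivative f') (at a)"
  unfolding has_derivative_componentwise_within[of f f' a UNIV]
  using assms by (simp add: Basis_vec_def cart_eq_inner_axis[symmetric])

lemma differentiable_vec_comp:
  fixes f :: "'a::real_normed_vector \<Rightarrow> real^'n"
  assumes "\<And>i. (\<lambda>x. f x $ i) differentiable (at a)"
  shows "f differentiable (at a)"
proof -
  obtain L where L: "\<And>i. ((\<lambda>x. f x $ i) has_derivative L i) (at a)"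
    using assms unfolding differentiable_def by metis
  have "(f has_derivative (\<lambda>h. \<chi> i. L i h)) (at a)"
    by (rule has_derivative_vec_comp) (simp add: L)
  then show ?thesis unfolding differentiable_def by blast
qed

lemma grad_inner:
  fixes f :: "real^'n \<Rightarrow> real"
  assumes "f differentiable (at x)"
  shows "frechet_derivative f (at x) v = grad f x \<bullet> v"
proof -
  have lin: "linear (frechet_derivative f (at x))"
    using assms frechet_derivative_works has_derivative_linear by blast
  have ve: "v = (\<Sum>i\<in>UNIV. (v $ i) *\<^sub>R axis i 1)"
    using basis_expansion[of v] by (simp add: scalar_mult_eq_scaleR)
  have e1: "frechet_derivative f (at x) v = frechet_derivative f (at x) (\<Sum>i\<in>UNIV. (v $ i) *\<^sub>R axis i 1)"
    using ve by (rule arg_cong)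
  also have "\<dots> = (\<Sum>i\<in>UNIV. v $ i * frechet_derivative f (at x) (axis i 1))"
    by (simp add: linear_sum[OF lin] linear_scale[OF lin])
  also have "\<dots> = grad f x \<bullet> v" by (simp add: grad_def inner_vec_def mult.commute)
  finally show ?thesis .
qed

lemma grad_comp:
  fixes f :: "real^'n \<Rightarrow> real" and g :: "real^'n \<Rightarrow> real^'n"
  assumes "g differentiable (at y)" "f differentiable (at (g y))"
  shows "grad (f \<circ> g) y = transpose (matrix (frechet_derivative g (at y))) *v grad f (g y)"
proof -
  have "grad (f \<circ> g) y $ i = grad f (g y) \<bullet> frechet_derivative g (at y) (axis i 1)" for i
  proof -
    have "grad (f \<circ> g) y $ i = frechet_derivative (f \<circ> g) (at y) (axis i 1)"
      unfolding grad_def by simp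
    also have "\<dots> = frechet_derivative f (at (g y)) (frechet_derivative g (at y) (axis i 1))"
      using frechet_derivative_compose[OF assms] by simp
    also have "\<dots> = grad f (g y) \<bullet> frechet_derivative g (at y) (axis i 1)"
      by (rule grad_inner[OF assms(2)])
    finally show ?thesis .
  qed
  then show ?thesis
    unfolding Finite_Cartesian_Product.vec_eq_iff by (simp add: matrix_def inner_vec_def vector_matrix_mult_def mult.commute)
qed

lemma grad_comp_comp:
  fixes f :: "real^'n \<Rightarrow> real" and g :: "real^'n \<Rightarrow> real^'n"
  assumes "g differentiable (at y)" "f differentiable (at (g y))"
  shows "grad (f \<circ> g) y $ i = grad f (g y) \<bullet> frechet_derivative g (at y) (axis i 1)"
proof -
  have "grad (f \<circ> g) y $ i = frechet_derivative (f \<circ> g) (at y) (axis i 1)"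
    unfolding grad_def by simp
  also have "\<dots> = frechet_derivative f (at (g y)) (frechet_derivative g (at y) (axis i 1))"
    using frechet_derivative_compose[OF assms] by simp
  also have "\<dots> = grad f (g y) \<bullet> frechet_derivative g (at y) (axis i 1)"
    by (rule grad_inner[OF assms(2)])
  finally show ?thesis .
qed

lemma differentiable_transform_open:
  assumes "f differentiable (at x)" "open S" "x \<in> S" "\<And>y. y \<in> S \<Longrightarrow> f y = g y"
  shows "g differentiable (at x)"
  using assms has_derivative_transform_within_open unfolding differentiable_def by metis

lemma invertible_matrix_inv:
  fixes A :: "real^'n^'n"
  assumes "invertible A"
  shows "A ** matrix_inv A = mat 1" "matrix_inv A ** A = mat 1"
proof -
  have "A ** matrix_inv A = mat 1 \<and> matrix_inv A ** A = mat 1"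
    using assms unfolding invertible_def matrix_inv_def by (rule someI_ex)
  then show "A ** matrix_inv A = mat 1" "matrix_inv A ** A = mat 1" by auto
qed

lemma lin_matrix_works:
  fixes f :: "real^'n \<Rightarrow> real^'m"
  assumes "linear f" shows "matrix f *v x = f x"
  using assms matrix_works linear_matrix_vector_mul_eq by blast

lemma comp_entry:
  fixes P A :: "real^'n^'n"
  shows "((transpose P ** A ** P) *v h) $ i = (A *v (P *v h)) \<bullet> (P *v axis i 1)"
proof -
  have "((transpose P ** A ** P) *v h) = transpose P *v (A *v (P *v h))"
    by (simp add: matrix_vector_mul_assoc matrix_mul_assoc)
  also have "\<dots> = (A *v (P *v h)) v* P" by simp
  finally have e: "((transpose P ** A ** P) *v h) $ i = ((A *v (P *v h)) v* P) \<bullet> axis i 1"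
    by (simp add: cart_eq_inner_axis)
  show ?thesis unfolding e dot_lmul_matrix ..
qed

lemma index_entry:
  fixes P J Ai :: "real^'n^'n"
  assumes "P ** J = mat 1"
  shows "((J ** Ai ** transpose J) *v (transpose P *v x)) \<bullet> (transpose P *v y) = (Ai *v x) \<bullet> y"
proof -
  have tt: "transpose J ** transpose P = mat 1"
    using assms by (metis matrix_transpose_mul Finite_Cartesian_Product.transpose_mat)
  have "(J ** Ai ** transpose J) *v (transpose P *v x) = (J ** Ai ** (transpose J ** transpose P)) *v x"
    by (simp only: matrix_vector_mul_assoc matrix_mul_assoc)
  also have "\<dots> = J *v (Ai *v x)" by (simp only: tt matrix_mul_rid matrix_vector_mul_assoc)
  also have "\<dots> = (Ai *v x) v* transpose J" by simp
  finally have e: "(J ** Ai ** transpose J) *v (transpose P *v x) = (Ai *v x) v* transpose J" .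
  have "transpose J *v (transpose P *v y) = y"
    by (simp only: matrix_vector_mul_assoc tt matrix_vector_mul_lid)
  then show ?thesis unfolding e dot_lmul_matrix by simp
qed

theorem theorem4p4:
  fixes \<Omega> \<Omega>' :: "(real^'n) set"
    and \<nu> :: "real^'n \<Rightarrow> real"
    and C :: "nat \<Rightarrow> real^'n \<Rightarrow> real"
    and lam :: "nat \<Rightarrow> real"
    and \<Phi> :: "real^'n \<Rightarrow> real^'n"
    and xe :: "real^'n"
  assumes n2: "CARD('n) \<ge> 2"
    and open_\<Omega>: "open \<Omega>"
    and smooth_\<nu>: "smooth_on \<Omega> \<nu>"
    and smooth_C: "\<And>i. i \<in> {1..CARD('n) - 1} \<Longrightarrow> smooth_on \<Omega> (C i)"
    and xe_E: "xe \<in> E_set \<Omega> \<nu> C"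
    and lam_e: "lagrange_cond C lam xe"
    and nondeg: "nondegenerate C lam xe"
    and open_\<Omega>': "open \<Omega>'" and sub: "\<Omega>' \<subseteq> \<Omega>" and xe_in: "xe \<in> \<Omega>'"
    and diffeo: "diffeo_on \<Omega>' \<Phi>"
  shows "\<Phi> xe \<in> E_set (\<Phi> ` \<Omega>') (push_nu \<Omega>' \<Phi> \<nu>) (\<lambda>i. push_fun \<Omega>' \<Phi> (C i))
       \<and> lagrange_cond (\<lambda>i. push_fun \<Omega>' \<Phi> (C i)) lam (\<Phi> xe)
       \<and> nondegenerate (\<lambda>i. push_fun \<Omega>' \<Phi> (C i)) lam (\<Phi> xe)
       \<and> index_I (push_nu \<Omega>' \<Phi> \<nu>) (\<lambda>i. push_fun \<Omega>' \<Phi> (C i)) lam (\<Phi> xe)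
           = index_I \<nu> C lam xe"
proof -
  define n where "n = CARD('n)"
  define \<Psi> where "\<Psi> = inv_into \<Omega>' \<Phi>"
  define V where "V = \<Phi> ` \<Omega>'"
  define y0 where "y0 = \<Phi> xe"
  have oV: "open V" and inj: "inj_on \<Phi> \<Omega>'" and s\<Phi>: "smooth_on \<Omega>' \<Phi>" and s\<Psi>: "smooth_on V \<Psi>"
    using diffeo unfolding diffeo_on_def V_def \<Psi>_def by auto
  have y0V: "y0 \<in> V" using xe_in by (simp add: y0_def V_def)
  have \<Psi>y0: "\<Psi> y0 = xe" using inj xe_in by (simp add: \<Psi>_def y0_def)
  have \<Psi>V: "\<Psi> y \<in> \<Omega>" if "y \<in> V" for y
    using inv_into_into[of y \<Phi> \<Omega>'] that sub by (auto simp: \<Psi>_def V_def)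
  have d\<Phi>: "\<Phi> differentiable (at xe)" using smooth_diff(1)[OF s\<Phi> open_\<Omega>' xe_in] .
  have d\<Psi>: "\<Psi> differentiable (at y)" if "y \<in> V" for y using smooth_diff(1)[OF s\<Psi> oV that] .
  have dC: "C i differentiable (at y)" if "i \<in> {1..n-1}" "y \<in> \<Omega>" for i y
    using smooth_diff(1)[OF smooth_C open_\<Omega>] that by (simp add: n_def)
  have dCd: "(\<lambda>y. frechet_derivative (C i) (at y) v) differentiable (at xe)" if "i \<in> {1..n-1}" for i v
    using smooth_diff(2)[OF smooth_C open_\<Omega>] that xe_in sub by (auto simp: n_def)
  have xe\<Omega>: "xe \<in> \<Omega>" using xe_in sub by auto
  define J where "J = matrix (frechet_derivative \<Phi> (at xe))"
  define P where "P = matrix (frechet_derivative \<Psi> (at y0))"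
  have lin\<Phi>: "linear (frechet_derivative \<Phi> (at xe))"
    using d\<Phi> frechet_derivative_works has_derivative_linear by blast
  have lin\<Psi>: "linear (frechet_derivative \<Psi> (at y0))"
    using d\<Psi>[OF y0V] frechet_derivative_works has_derivative_linear by blast
  have PJ: "P ** J = mat 1"
  proof -
    have h1: "((\<Psi> \<circ> \<Phi>) has_derivative (frechet_derivative \<Psi> (at y0) \<circ> frechet_derivative \<Phi> (at xe))) (at xe)"
      using diff_chain_at[OF d\<Phi>[unfolded frechet_derivative_works] d\<Psi>[OF y0V, unfolded frechet_derivative_works y0_def]]
      by (simp add: y0_def)
    have h2: "((\<Psi> \<circ> \<Phi>) has_derivative (\<lambda>x. x)) (at xe)"
      by (rule has_derivative_transform_within_open[OF has_derivative_ident open_\<Omega>' xe_in])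
         (use inj in \<open>simp add: \<Psi>_def\<close>)
    have "frechet_derivative \<Psi> (at y0) \<circ> frechet_derivative \<Phi> (at xe) = id"
      using has_derivative_unique[OF h1 h2] by (simp add: id_def)
    then have "matrix (frechet_derivative \<Psi> (at y0) \<circ> frechet_derivative \<Phi> (at xe)) = mat 1"
      by (simp add: matrix_id_mat_1)
    then show ?thesis using matrix_compose[OF lin\<Phi> lin\<Psi>] by (simp add: P_def J_def)
  qed
  have JP: "J ** P = mat 1" using PJ matrix_left_right_inverse by blast
  define Q where "Q = transpose P"
  have QJ: "Q ** transpose J = mat 1"
    unfolding Q_def by (metis JP matrix_transpose_mul Finite_Cartesian_Product.transpose_mat)
  have invQ: "invertible Q" using QJ invertible_right_inverse by blast
  have detJP: "det J * det P = 1"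
    using JP by (metis Determinants.det_mul Determinants.det_I)

  define F where "F = F_lam C lam"
  have sub12: "{1..n-2} \<subseteq> {1..n-1}" by auto
  have n1: "n - 1 \<in> {1..n-1}" using n2 by (simp add: n_def)
  define F' where "F' = (\<lambda>y v. frechet_derivative (C (n-1)) (at y) v + (\<Sum>i\<in>{1..n-2}. lam i * frechet_derivative (C i) (at y) v))"
  have FD: "(F has_derivative F' y) (at y)" if "y \<in> \<Omega>" for y
  proof -
    have "\<And>i. i \<in> {1..n-2} \<Longrightarrow> (C i has_derivative frechet_derivative (C i) (at y)) (at y)"
      using dC that sub12 frechet_derivative_works by blast
    moreover have "(C (n-1) has_derivative frechet_derivative (C (n-1)) (at y)) (at y)"
      using dC[OF n1 that] frechet_derivative_works by blast
    ultimately show ?thesis unfolding F_def F_lam_def F'_def n_def[symmetric]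
      by (intro has_derivative_add has_derivative_sum has_derivative_mult_right) auto
  qed
  have dF: "F differentiable (at y)" if "y \<in> \<Omega>" for y
    using FD[OF that] unfolding differentiable_def by blast
  have gradF: "grad F y = grad (C (n-1)) y + (\<Sum>i\<in>{1..n-2}. lam i *\<^sub>R grad (C i) y)" if "y \<in> \<Omega>" for y
    using frechet_derivative_at[OF FD[OF that], symmetric]
    by (simp add: Finite_Cartesian_Product.vec_eq_iff grad_def F'_def)
  have gradF0: "grad F xe = 0"
    using lam_e gradF[OF xe\<Omega>] unfolding lagrange_cond_def n_def by simp
  have dgF: "grad F differentiable (at xe)"
  proof (rule differentiable_vec_comp)
    fix k
    have "(\<lambda>y. F' y (axis k 1)) differentiable (at xe)"
      unfolding F'_def using dCd n1 sub12
      by (intro differentiable_add differentiable_sum differentiable_mult differentiable_const) auto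
    then show "(\<lambda>y. grad F y $ k) differentiable (at xe)"
      by (rule differentiable_transform_open[OF _ open_\<Omega> xe\<Omega>])
         (simp add: grad_def frechet_derivative_at[OF FD, symmetric])
  qed
  define A where "A = Hess F xe"
  have linA: "linear (frechet_derivative (grad F) (at xe))"
    using dgF frechet_derivative_works has_derivative_linear by blast
  have gFD: "(grad F has_derivative (\<lambda>h. A *v h)) (at xe)"
    using dgF[unfolded frechet_derivative_works] lin_matrix_works[OF linA]
    by (simp add: A_def Hess_def)
  have invA: "invertible A" using nondeg unfolding nondegenerate_def A_def F_def by simp

  define G where "G = F \<circ> \<Psi>"
  have FG: "F_lam (\<lambda>i. push_fun \<Omega>' \<Phi> (C i)) lam = G"
    by (simp add: F_lam_def push_fun_def G_def F_def \<Psi>_def fun_eq_iff)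
  define M where "M = transpose P ** A ** P"
  have gGc: "grad G y $ i = grad F (\<Psi> y) \<bullet> frechet_derivative \<Psi> (at y) (axis i 1)" if "y \<in> V" for y i
    unfolding G_def using grad_comp_comp[OF d\<Psi>[OF that] dF[OF \<Psi>V[OF that]]] .
  have GD: "(grad G has_derivative (\<lambda>h. M *v h)) (at y0)"
  proof (rule has_derivative_vec_comp)
    fix i
    obtain B where B: "((\<lambda>y. frechet_derivative \<Psi> (at y) (axis i 1)) has_derivative B) (at y0)"
      using smooth_diff(2)[OF s\<Psi> oV y0V] unfolding differentiable_def by blast
    have a: "((grad F \<circ> \<Psi>) has_derivative ((\<lambda>h. A *v h) \<circ> frechet_derivative \<Psi> (at y0))) (at y0)"
    proof -
      have gFD': "(grad F has_derivative (\<lambda>h. A *v h)) (at (\<Psi> y0))" using gFD \<Psi>y0 by simp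
      show ?thesis by (rule diff_chain_at[OF d\<Psi>[OF y0V, unfolded frechet_derivative_works] gFD'])
    qed
    have "((\<lambda>y. (grad F \<circ> \<Psi>) y \<bullet> frechet_derivative \<Psi> (at y) (axis i 1)) has_derivative
       (\<lambda>h. (grad F \<circ> \<Psi>) y0 \<bullet> B h + ((\<lambda>h. A *v h) \<circ> frechet_derivative \<Psi> (at y0)) h \<bullet> frechet_derivative \<Psi> (at y0) (axis i 1))) (at y0)"
      by (rule has_derivative_inner[OF a B])
    then have "((\<lambda>y. (grad F \<circ> \<Psi>) y \<bullet> frechet_derivative \<Psi> (at y) (axis i 1)) has_derivative
       (\<lambda>h. (M *v h) $ i)) (at y0)"
      by (rule has_derivative_eq_rhs)
         (simp add: fun_eq_iff \<Psi>y0 gradF0 M_def comp_entry lin_matrix_works[OF lin\<Psi>, folded P_def])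
    then show "((\<lambda>y. grad G y $ i) has_derivative (\<lambda>h. (M *v h) $ i)) (at y0)"
      by (rule has_derivative_transform_within_open[OF _ oV y0V]) (simp add: gGc)
  qed
  have HG: "Hess G y0 = M"
    unfolding Hess_def using frechet_derivative_at[OF GD] by (metis matrix_of_matrix_vector_mul)
  have gpush: "grad (push_fun \<Omega>' \<Phi> (C i)) y0 = Q *v grad (C i) xe" if "i \<in> {1..n-1}" for i
    unfolding push_fun_def \<Psi>_def[symmetric]
    using grad_comp[OF d\<Psi>[OF y0V]] dC[OF that xe\<Omega>] \<Psi>y0 by (simp add: P_def Q_def)
  define Ai where "Ai = matrix_inv A"
  define N where "N = J ** Ai ** transpose J"
  have MN: "M ** N = mat 1"
  proof -
    have "M ** N = transpose P ** A ** (P ** J) ** Ai ** transpose J"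
      by (simp add: M_def N_def matrix_mul_assoc)
    also have "\<dots> = transpose P ** (A ** Ai) ** transpose J"
      by (simp add: PJ matrix_mul_assoc)
    also have "\<dots> = mat 1" using invertible_matrix_inv(1)[OF invA] QJ by (simp add: Ai_def Q_def)
    finally show ?thesis .
  qed
  have invM: "invertible M" using MN invertible_right_inverse by blast
  have MiN: "matrix_inv M = N" using matrix_inv_eq(1)[OF MN] .
  have detM: "det M = det P ^ 2 * det A"
    by (simp add: M_def Determinants.det_mul power2_eq_square)
  have nuy0: "push_nu \<Omega>' \<Phi> \<nu> y0 = \<nu> xe * det J"
    unfolding push_nu_def \<Psi>_def[symmetric] by (simp add: \<Psi>y0 J_def)
  have nuxe: "\<nu> xe \<noteq> 0" using xe_E unfolding E_set_def by auto
  have detJ0: "det J \<noteq> 0" using detJP by auto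
  have w1: "wedge_zero m (\<lambda>i. grad (push_fun \<Omega>' \<Phi> (C i)) y0) = wedge_zero m (\<lambda>i. grad (C i) xe)"
    if "m \<le> n - 1" for m
    by (rule wedge_zero_transform[OF invQ]) (use that gpush in auto)
  have E: "\<Phi> xe \<in> E_set (\<Phi> ` \<Omega>') (push_nu \<Omega>' \<Phi> \<nu>) (\<lambda>i. push_fun \<Omega>' \<Phi> (C i))"
    using xe_E xe_in nuy0 nuxe detJ0 w1[of "n-2"] w1[of "n-1"]
    unfolding E_set_def n_def y0_def by auto
  have L: "lagrange_cond (\<lambda>i. push_fun \<Omega>' \<Phi> (C i)) lam (\<Phi> xe)"
  proof -
    have "grad (push_fun \<Omega>' \<Phi> (C (n - 1))) y0 + (\<Sum>i\<in>{1..n-2}. lam i *\<^sub>R grad (push_fun \<Omega>' \<Phi> (C i)) y0)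
        = Q *v grad (C (n - 1)) xe + (\<Sum>i\<in>{1..n-2}. lam i *\<^sub>R (Q *v grad (C i) xe))"
      using gpush n1 sub12 by (intro arg_cong2[where f="(+)"] sum.cong) auto
    also have "\<dots> = Q *v (grad (C (n - 1)) xe + (\<Sum>i\<in>{1..n-2}. lam i *\<^sub>R grad (C i) xe))"
      by (simp add: linear_sum[OF matrix_vector_mul_linear] linear_scale[OF matrix_vector_mul_linear]
          matrix_vector_right_distrib)
    also have "\<dots> = 0" using lam_e unfolding lagrange_cond_def n_def by simp
    finally show ?thesis unfolding lagrange_cond_def n_def y0_def .
  qed
  have ND: "nondegenerate (\<lambda>i. push_fun \<Omega>' \<Phi> (C i)) lam (\<Phi> xe)"
    unfolding nondegenerate_def FG y0_def[symmetric] HG using invM .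
  have W: "wedge_ip (n-2) (\<lambda>i. N *v grad (push_fun \<Omega>' \<Phi> (C i)) y0) (\<lambda>i. grad (push_fun \<Omega>' \<Phi> (C i)) y0)
     = wedge_ip (n-2) (\<lambda>i. Ai *v grad (C i) xe) (\<lambda>i. grad (C i) xe)"
    unfolding wedge_ip_def
  proof (rule detn_cong)
    fix i j assume "i < n - 2" "j < n - 2"
    then have "Suc i \<in> {1..n-1}" "Suc j \<in> {1..n-1}" by auto
    then show "(N *v grad (push_fun \<Omega>' \<Phi> (C (Suc i))) y0) \<bullet> grad (push_fun \<Omega>' \<Phi> (C (Suc j))) y0
        = (Ai *v grad (C (Suc i)) xe) \<bullet> grad (C (Suc j)) xe"
      using gpush index_entry[OF PJ] by (simp add: N_def Q_def)
  qed
  have I: "index_I (push_nu \<Omega>' \<Phi> \<nu>) (\<lambda>i. push_fun \<Omega>' \<Phi> (C i)) lam (\<Phi> xe) = index_I \<nu> C lam xe"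
  proof -
    have "index_I (push_nu \<Omega>' \<Phi> \<nu>) (\<lambda>i. push_fun \<Omega>' \<Phi> (C i)) lam (\<Phi> xe)
       = (\<nu> xe * det J)^2 * (det P ^ 2 * det A) *
         wedge_ip (n-2) (\<lambda>i. N *v grad (push_fun \<Omega>' \<Phi> (C i)) y0) (\<lambda>i. grad (push_fun \<Omega>' \<Phi> (C i)) y0)"
      unfolding index_I_def Let_def FG y0_def[symmetric] HG nuy0 detM MiN n_def ..
    also have "\<dots> = (\<nu> xe)^2 * (det J * det P)^2 * det A *
         wedge_ip (n-2) (\<lambda>i. Ai *v grad (C i) xe) (\<lambda>i. grad (C i) xe)"
      unfolding W by (simp add: power_mult_distrib)
    also have "\<dots> = index_I \<nu> C lam xe"
      unfolding index_I_def Let_def detJP A_def Ai_def F_def n_def by simp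
    finally show ?thesis .
  qed
  show ?thesis using E L ND I by blast
qed

end
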